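(* Let $\alpha,\beta>-1$ and let $m,n$ be non-negative integers. For $y\in\mathbb{R}$ define \[ R_{m,n}(y)=\int_{-1}^1(1-x)^\alpha (1+x)^\beta P_n^{(\alpha,\beta)}(x)P_{n+m}^{(\alpha,\beta)}(x+y)\,dx . \] Then \begin{multline*} R_{m,n}(y)= 2^{\alpha+\beta+1}\dfrac{\Gamma(\alpha+n+1)\Gamma(\beta+n+1)}{\Gamma(\alpha+\beta+2n+2)} \dfrac{\Gamma(\alpha+\beta+2m+2n+1)}{\Gamma(\alpha+\beta+m+n+1)}\dfrac{1}{n!\,m!}\left(\dfrac{y}{2}\right)^m \\ \cdot F_2\left(-m;\ \beta+n+1,\ -\beta-m-n;\ \alpha+\beta+2n+2,\ -\alpha-\beta-2m-2n;\ -\dfrac{2}{y},\dfrac{2}{y}\right). \end{multline*}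
   Context: $P_n^{(\alpha,\beta)}$ is the Jacobi polynomial, $P_n^{(\alpha,\beta)}(x)=\frac{(\alpha+1)_n}{n!}\sum_{k=0}^n\frac{(-n)_k(\alpha+\beta+n+1)_k}{(\alpha+1)_k\,k!}\left(\frac{1-x}{2}\right)^k$, where $(a)_k=a(a+1)\cdots(a+k-1)$ is the Pochhammer symbol. $F_2$ is the Appell function $F_2(a;b,b';c,c';u,v)=\sum_{k,l\ge 0}\frac{(a)_{k+l}(b)_k(b')_l}{(c)_k(c')_l\,k!\,l!}u^kv^l$; for $a=-m$ the sum terminates ($k+l\le m$), so $y^mF_2(-m;\dots;-2/y,2/y)$ is a polynomial in $y$, and the right-hand side is understood as this polynomial (in particular at $y=0$). *)

theory Defs
  imports "HOL-Analysis.Analysis"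
begin

definition jacobiP :: "nat \<Rightarrow> real \<Rightarrow> real \<Rightarrow> real \<Rightarrow> real" where
  "jacobiP n a b x = pochhammer (a + 1) n / fact n *
     (\<Sum>k\<le>n. pochhammer (- real n) k * pochhammer (a + b + real n + 1) k
              / (pochhammer (a + 1) k * fact k) * ((1 - x) / 2) ^ k)"

text \<open>Appell F2 with first parameter a = -m (terminating: terms with k + l > m vanish
  since pochhammer (-m) (k+l) = 0).\<close>
definition appellF2_neg :: "nat \<Rightarrow> real \<Rightarrow> real \<Rightarrow> real \<Rightarrow> real \<Rightarrow> real \<Rightarrow> real \<Rightarrow> real" where
  "appellF2_neg m b b' c c' u v =
     (\<Sum>k\<le>m. \<Sum>l\<le>m - k. pochhammer (- real m) (k + l) * pochhammer b k * pochhammer b' l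
        / (pochhammer c k * pochhammer c' l * fact k * fact l) * u ^ k * v ^ l)"

text \<open>The polynomial (y/2)^m * F2(-m; b, b'; c, c'; -2/y, 2/y), valid for all real y
  (including y = 0), obtained by multiplying out the terminating sum.\<close>
definition appellF2_poly :: "nat \<Rightarrow> real \<Rightarrow> real \<Rightarrow> real \<Rightarrow> real \<Rightarrow> real \<Rightarrow> real" where
  "appellF2_poly m b b' c c' y =
     (\<Sum>k\<le>m. \<Sum>l\<le>m - k. pochhammer (- real m) (k + l) * pochhammer b k * pochhammer b' l
        / (pochhammer c k * pochhammer c' l * fact k * fact l) * (-1) ^ k * (y / 2) ^ (m - k - l))"

lemma appellF2_poly_eq:
  assumes "y \<noteq> 0"
  shows "appellF2_poly m b b' c c' y = (y / 2) ^ m * appellF2_neg m b b' c c' (- 2 / y) (2 / y)"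
proof -
  have key: "(y / 2) ^ m * ((- 2 / y) ^ k * (2 / y) ^ l) = (-1) ^ k * (y / 2) ^ (m - k - l)"
    if "l \<le> m - k" "k \<le> m" for k l
  proof -
    have m: "m = (m - k - l) + k + l" using that by simp
    have "(y / 2) ^ m = (y / 2) ^ (m - k - l) * (y / 2) ^ k * (y / 2) ^ l"
      by (subst m) (simp add: power_add)
    moreover have "(y / 2) ^ k * (- 2 / y) ^ k = (-1) ^ k"
      using assms by (simp add: power_mult_distrib[symmetric])
    moreover have "(y / 2) ^ l * (2 / y) ^ l = 1"
      using assms by (simp add: power_mult_distrib[symmetric])
    ultimately show ?thesis
    proof -
      assume h: "(y / 2) ^ m = (y / 2) ^ (m - k - l) * (y / 2) ^ k * (y / 2) ^ l"
        "(y / 2) ^ k * (- 2 / y) ^ k = (-1) ^ k" "(y / 2) ^ l * (2 / y) ^ l = 1"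
      have "(y / 2) ^ m * ((- 2 / y) ^ k * (2 / y) ^ l)
          = (y / 2) ^ (m - k - l) * ((y / 2) ^ k * (- 2 / y) ^ k) * ((y / 2) ^ l * (2 / y) ^ l)"
        unfolding h(1) by (simp only: mult_ac)
      then show ?thesis unfolding h(2,3) by simp
    qed
  qed
  show ?thesis
    unfolding appellF2_poly_def appellF2_neg_def sum_distrib_left
    apply (intro sum.cong refl)
    using key by (simp add: algebra_simps)
qed

definition jacobi_R :: "real \<Rightarrow> real \<Rightarrow> nat \<Rightarrow> nat \<Rightarrow> real \<Rightarrow> real" where
  "jacobi_R a b m n y = integral {-1..1}
     (\<lambda>x. (1 - x) powr a * (1 + x) powr b * jacobiP n a b x * jacobiP (n + m) a b (x + y))"

end

theory Submission
  imports Defs "HOL-Computational_Algebra.Formal_Power_Series"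
begin

lemma beta_pm1:
  fixes p q :: real
  assumes p: "p > -1" and q: "q > -1"
  shows "((\<lambda>x. (1 - x) powr p * (1 + x) powr q) has_integral
           2 powr (p + q + 1) * Beta (p + 1) (q + 1)) {-1..1}"
proof -
  have "((\<lambda>t. t powr ((q+1) - 1) * (1 - t) powr ((p+1) - 1)) has_integral Beta (q+1) (p+1)) (cbox 0 1)"
    using has_integral_Beta_real[of "q+1" "p+1"] p q by simp
  from has_integral_affinity'[OF this, of "1/2" "1/2"]
  have "((\<lambda>x. ((1/2) * x + 1/2) powr q * (1 - ((1/2) * x + 1/2)) powr p) has_integral
          2 * Beta (q+1) (p+1)) (cbox (-1) 1)"
    by (simp add: field_simps)
  then have h: "((\<lambda>x. ((1 + x) / 2) powr q * ((1 - x) / 2) powr p) has_integral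
          2 * Beta (p+1) (q+1)) {-1..1}"
    by (simp add: field_simps Beta_commute)
  have h2: "((\<lambda>x. 2 powr (p + q) * (((1 + x) / 2) powr q * ((1 - x) / 2) powr p)) has_integral
          2 powr (p + q) * (2 * Beta (p+1) (q+1))) {-1..1}"
    by (rule has_integral_mult_right[OF h])
  have v: "2 powr (p + q) * (2 * Beta (p + 1) (q + 1)) = 2 powr (p + q + 1) * Beta (p + 1) (q + 1)"
    by (simp add: powr_add)
  show ?thesis
  proof (rule has_integral_eq[OF _ h2[unfolded v]])
    fix x :: real assume x: "x \<in> {-1..1}"
    then have x1: "1 - x \<ge> 0" "1 + x \<ge> 0" by auto
    have "2 powr (p + q) * (((1 + x) / 2) powr q * ((1 - x) / 2) powr p)
       = (2 powr p * ((1 - x) / 2) powr p) * (2 powr q * ((1 + x) / 2) powr q)"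
      by (simp add: powr_add)
    also have "\<dots> = (2 * ((1 - x) / 2)) powr p * (2 * ((1 + x) / 2)) powr q"
      using x1 powr_mult[of 2 "(1-x)/2" p] powr_mult[of 2 "(1+x)/2" q] by simp
    also have "\<dots> = (1 - x) powr p * (1 + x) powr q"
      by (simp only: times_divide_eq_right nonzero_mult_div_cancel_left[of 2] zero_neq_numeral)
    finally show "2 powr (p + q) * (((1 + x) / 2) powr q * ((1 - x) / 2) powr p) = (1 - x) powr p * (1 + x) powr q" .
  qed
qed


lemma powr_add_nat:
  fixes z a :: real
  assumes "z \<ge> 0"
  shows "z powr (a + real k) = z powr a * z ^ k"
proof (cases "z = 0")
  case True then show ?thesis by simp
next
  case False
  then have "z > 0" using assms by simp
  then show ?thesis by (simp add: powr_add powr_realpow)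
qed

lemma IL:
  fixes a b :: real
  assumes a: "a > -1" and b: "b > -1"
  shows "((\<lambda>x. (1 - x) powr a * (1 + x) powr b * (((1 - x) / 2) ^ k * ((1 + x) / 2) ^ i)) has_integral
           2 powr (a + b + 1) * Beta (a + real k + 1) (b + real i + 1)) {-1..1}"
proof -
  have h: "((\<lambda>x. (1/2)^(k+i) * ((1 - x) powr (a + real k) * (1 + x) powr (b + real i))) has_integral
           (1/2)^(k+i) * (2 powr (a + real k + (b + real i) + 1) * Beta (a + real k + 1) (b + real i + 1))) {-1..1}"
    by (rule has_integral_mult_right, rule beta_pm1) (use a b in auto)
  have v: "(1/2::real)^(k+i) * 2 powr (a + real k + (b + real i) + 1) = 2 powr (a + b + 1)"
  proof -
    have "2 powr (a + real k + (b + real i) + 1) = 2 powr (a + b + 1) * (2::real) ^ (k + i)"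
      using powr_add_nat[of 2 "a + b + 1" "k + i"] by (simp add: add_ac)
    then show ?thesis by (simp add: power_one_over)
  qed
  have v2: "(1/2::real)^(k+i) * (2 powr (a + real k + (b + real i) + 1) * Beta (a + real k + 1) (b + real i + 1))
     = 2 powr (a + b + 1) * Beta (a + real k + 1) (b + real i + 1)"
    using v by (simp only: mult.assoc[symmetric])
  show ?thesis
  proof (rule has_integral_eq[OF _ h[unfolded v2]])
    fix x :: real assume "x \<in> {-1..1}"
    then have x: "1 - x \<ge> 0" "1 + x \<ge> 0" by auto
    show "(1/2)^(k+i) * ((1 - x) powr (a + real k) * (1 + x) powr (b + real i))
        = (1 - x) powr a * (1 + x) powr b * (((1 - x) / 2) ^ k * ((1 + x) / 2) ^ i)"
      unfolding powr_add_nat[OF x(1)] powr_add_nat[OF x(2)]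
      by (simp add: power_add power_divide field_simps)
  qed
qed



lemma sum_le_if:
  fixes g :: "nat \<Rightarrow> 'a::comm_monoid_add"
  assumes "k \<le> N"
  shows "(\<Sum>j\<le>k. g j) = (\<Sum>j\<le>N. if j \<le> k then g j else 0)"
proof -
  have "{..k} = {..N} \<inter> {j. j \<le> k}" using assms by auto
  then show ?thesis by (simp add: sum.inter_restrict)
qed

lemma tri1:
  fixes g :: "nat \<Rightarrow> nat \<Rightarrow> 'a::comm_monoid_add"
  shows "(\<Sum>k\<le>N. \<Sum>j\<le>k. g k j) = (\<Sum>j\<le>N. \<Sum>i\<le>N-j. g (j+i) j)"
proof -
  have "(\<Sum>k\<le>N. \<Sum>j\<le>k. g k j) = (\<Sum>k\<le>N. \<Sum>j\<le>N. if j \<le> k then g k j else 0)"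
    by (intro sum.cong refl sum_le_if) auto
  also have "\<dots> = (\<Sum>j\<le>N. \<Sum>k\<le>N. if j \<le> k then g k j else 0)"
    by (rule sum.swap)
  also have "\<dots> = (\<Sum>j\<le>N. \<Sum>i\<le>N-j. g (j+i) j)"
  proof (rule sum.cong[OF refl])
    fix j assume j: "j \<in> {..N}"
    have e: "{..N} \<inter> {k. j \<le> k} = {j..N}" by auto
    have "(\<Sum>k\<le>N. if j \<le> k then g k j else 0) = (\<Sum>k\<in>{j..N}. g k j)"
      using sum.inter_restrict[of "{..N}" "\<lambda>k. g k j" "{k. j \<le> k}"] by (simp add: e)
    also have "\<dots> = (\<Sum>k\<in>{0+j..(N-j)+j}. g k j)" using j by simp
    also have "\<dots> = (\<Sum>i\<in>{0..N-j}. g (i+j) j)" by (rule sum.shift_bounds_cl_nat_ivl)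
    finally show "(\<Sum>k\<le>N. if j \<le> k then g k j else 0) = (\<Sum>i\<le>N-j. g (j+i) j)"
      by (simp add: atLeast0AtMost add.commute)
  qed
  finally show ?thesis .
qed

lemma tri2:
  fixes f :: "nat \<Rightarrow> nat \<Rightarrow> 'a::comm_monoid_add"
  shows "(\<Sum>k\<le>m. \<Sum>l\<le>m-k. f k l) = (\<Sum>l\<le>m. \<Sum>k\<le>m-l. f k l)"
proof -
  have "(\<Sum>k\<le>m. \<Sum>l\<le>m-k. f k l) = (\<Sum>k\<le>m. \<Sum>l\<le>m. if l \<le> m - k then f k l else 0)"
    by (intro sum.cong refl sum_le_if) auto
  also have "\<dots> = (\<Sum>l\<le>m. \<Sum>k\<le>m. if l \<le> m - k then f k l else 0)"
    by (rule sum.swap)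
  also have "\<dots> = (\<Sum>l\<le>m. \<Sum>k\<le>m. if k \<le> m - l then f k l else 0)"
    by (intro sum.cong refl) auto
  also have "\<dots> = (\<Sum>l\<le>m. \<Sum>k\<le>m-l. f k l)"
    by (intro sum.cong refl sum_le_if[symmetric]) auto
  finally show ?thesis .
qed

lemma sum_rev_atMost:
  fixes f :: "nat \<Rightarrow> 'a::comm_monoid_add"
  shows "(\<Sum>l\<le>m. f l) = (\<Sum>q\<le>m. f (m - q))"
  using sum.atLeastAtMost_rev[of f 0 m] by (simp add: atLeast0AtMost)

lemma sum_split_from:
  fixes f :: "nat \<Rightarrow> 'a::comm_monoid_add"
  assumes "\<And>i. i < n \<Longrightarrow> f i = 0" "n \<le> j"
  shows "(\<Sum>i\<le>j. f i) = (\<Sum>p\<le>j-n. f (n+p))"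
proof -
  have "(\<Sum>i\<le>j. f i) = (\<Sum>i\<le>j. if n \<le> i then f i else 0)"
    using assms(1) by (intro sum.cong refl) auto
  also have "\<dots> = (\<Sum>i\<in>{n..j}. f i)"
  proof -
    have e: "{..j} \<inter> {k. n \<le> k} = {n..j}" by auto
    show ?thesis using sum.inter_restrict[of "{..j}" f "{k. n \<le> k}"] by (simp add: e)
  qed
  also have "\<dots> = (\<Sum>i\<in>{0+n..(j-n)+n}. f i)" using assms(2) by simp
  also have "\<dots> = (\<Sum>p\<in>{0..j-n}. f (p+n))" by (rule sum.shift_bounds_cl_nat_ivl)
  finally show ?thesis by (simp add: atLeast0AtMost add.commute)
qed


lemma poch_neg_nat:
  "pochhammer (- real N) j * (-1) ^ j = fact N / fact (N - j)" if "j \<le> N"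
proof -
  have "pochhammer (- real N) j = (-1)^j * pochhammer (real N - real j + 1) j"
    by (rule pochhammer_minus)
  moreover have "pochhammer (real (N - j) + 1) j = fact N / fact (N - j)"
  proof -
    have "fact (N - j + j) = (fact (N - j) :: real) * pochhammer (1 + real (N - j)) j"
      unfolding pochhammer_fact pochhammer_product' by simp
    then show ?thesis using that by (simp add: field_simps add.commute)
  qed
  ultimately show ?thesis using that by (simp add: of_nat_diff)
qed

lemma key_h:
  fixes a b :: real
  assumes a: "a > -1" and j: "j \<le> N"
  shows "pochhammer (a+1) N / fact N *
     (\<Sum>i\<le>N-j. pochhammer (- real N) (j+i) * pochhammer (a + b + real N + 1) (j+i)
        / (pochhammer (a + 1) (j+i) * fact (j+i)) * of_nat ((j+i) choose j)) * (-1)^j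
   = pochhammer (real N + a + b + 1) j * pochhammer (- real N - b) (N - j) / (fact (N - j) * fact j)"
proof -
  define M where "M = N - j"
  have NM: "N = j + M" using j by (simp add: M_def)
  define B where "B = a + b + real N + 1"
  define c0 where "c0 = pochhammer (- real N) j * pochhammer B j / (pochhammer (a+1) j * fact j)"
  have pos1: "pochhammer (a+1) k > 0" for k using a by (intro pochhammer_pos) simp
  have pos2: "pochhammer (a+1+real j) k > 0" for k using a by (intro pochhammer_pos) simp
  have sp: "pochhammer (- real N) (j+i) * pochhammer B (j+i)
        / (pochhammer (a + 1) (j+i) * fact (j+i)) * of_nat ((j+i) choose j)
      = c0 * (pochhammer (B + real j) i * pochhammer (- real M) i / (fact i * pochhammer (a+1+real j) i))" for i
  proof -
    have e1: "- real N + real j = - real M" by (simp add: NM)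
    have e2: "of_nat ((j+i) choose j) = (fact (j+i) :: real) / (fact j * fact i)"
      by (subst binomial_fact) auto
    have "pochhammer (- real N) (j+i) = pochhammer (- real N) j * pochhammer (- real M) i"
      by (simp only: pochhammer_product' e1)
    moreover have "pochhammer B (j+i) = pochhammer B j * pochhammer (B + real j) i"
      by (simp add: pochhammer_product')
    moreover have "pochhammer (a+1) (j+i) = pochhammer (a+1) j * pochhammer (a+1+real j) i"
      by (simp add: pochhammer_product')
    ultimately show ?thesis
      unfolding e2 c0_def using pos1[of j] pos2[of i]
      by (simp add: field_simps)
  qed
  have vm: "(\<Sum>i\<le>M. pochhammer (B + real j) i * pochhammer (- real M) i / (fact i * pochhammer (a+1+real j) i))
      = pochhammer (a + 1 + real j - (B + real j)) M / pochhammer (a+1+real j) M"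
    using Vandermonde_pochhammer[of M "a+1+real j" "B + real j"] a
    by (simp add: atLeast0AtMost)
  have e3: "a + 1 + real j - (B + real j) = - real N - b" by (simp add: B_def)
  have e4: "pochhammer (a+1) N = pochhammer (a+1) j * pochhammer (a+1+real j) M"
    by (simp add: NM pochhammer_product')
  have e5: "pochhammer (- real N) j * (-1) ^ j = fact N / fact M"
    using poch_neg_nat[OF j] by (simp add: M_def)
  have "pochhammer (a+1) N / fact N *
     (\<Sum>i\<le>N-j. pochhammer (- real N) (j+i) * pochhammer B (j+i)
        / (pochhammer (a + 1) (j+i) * fact (j+i)) * of_nat ((j+i) choose j)) * (-1)^j
     = pochhammer (a+1) N / fact N * c0 * (pochhammer (- real N - b) M / pochhammer (a+1+real j) M) * (-1)^j"
    unfolding sp sum_distrib_left[symmetric] M_def[symmetric] vm e3 by simp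
  also have "\<dots> = pochhammer B j * pochhammer (- real N - b) M / (fact M * fact j)"
    unfolding c0_def e4 using pos1[of j] pos2[of M] e5
    by (simp add: field_simps)
  finally show ?thesis by (simp add: B_def M_def add_ac)
qed


lemma jacobi_w:
  fixes a b z :: real
  assumes a: "a > -1"
  shows "jacobiP N a b z = (\<Sum>j\<le>N. pochhammer (real N + a + b + 1) j * pochhammer (- real N - b) (N - j)
            / (fact (N - j) * fact j) * ((1 + z) / 2) ^ j)"
proof -
  define w where "w = (1 + z) / 2"
  define c where "c k = pochhammer (- real N) k * pochhammer (a + b + real N + 1) k
              / (pochhammer (a + 1) k * fact k)" for k
  have u: "(1 - z) / 2 = (- w) + 1" by (simp add: w_def field_simps)
  have "jacobiP N a b z = pochhammer (a+1) N / fact N * (\<Sum>k\<le>N. c k * ((- w) + 1) ^ k)"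
    unfolding jacobiP_def c_def u by simp
  also have "(\<Sum>k\<le>N. c k * ((- w) + 1) ^ k) = (\<Sum>k\<le>N. \<Sum>j\<le>k. c k * (of_nat (k choose j) * (- w) ^ j))"
  proof -
    have bin: "((- w) + 1) ^ k = (\<Sum>j\<le>k. of_nat (k choose j) * (- w) ^ j)" for k
      using binomial_ring[of "- w" 1 k] by simp
    show ?thesis by (simp only: bin sum_distrib_left)
  qed
  also have "\<dots> = (\<Sum>j\<le>N. \<Sum>i\<le>N-j. c (j+i) * (of_nat ((j+i) choose j) * (- w) ^ j))"
    by (rule tri1)
  also have "\<dots> = (\<Sum>j\<le>N. (\<Sum>i\<le>N-j. c (j+i) * of_nat ((j+i) choose j)) * (-1) ^ j * w ^ j)"
    by (rule sum.cong[OF refl]) (simp add: sum_distrib_right power_minus[of w] mult.assoc)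
  also have "pochhammer (a+1) N / fact N * \<dots> = (\<Sum>j\<le>N. pochhammer (a+1) N / fact N * ((\<Sum>i\<le>N-j. c (j+i) * of_nat ((j+i) choose j)) * (-1) ^ j * w ^ j))"
    by (rule sum_distrib_left)
  also have "\<dots> = (\<Sum>j\<le>N. pochhammer (real N + a + b + 1) j * pochhammer (- real N - b) (N - j)
            / (fact (N - j) * fact j) * w ^ j)"
  proof (rule sum.cong[OF refl])
    fix j assume "j \<in> {..N}"
    then have j: "j \<le> N" by simp
    have "pochhammer (a+1) N / fact N * ((\<Sum>i\<le>N-j. c (j+i) * of_nat ((j+i) choose j)) * (-1) ^ j * w ^ j)
      = (pochhammer (a+1) N / fact N * (\<Sum>i\<le>N-j. c (j+i) * of_nat ((j+i) choose j)) * (-1) ^ j) * w ^ j"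
      by (simp only: mult.assoc)
    then show "pochhammer (a+1) N / fact N * ((\<Sum>i\<le>N-j. c (j+i) * of_nat ((j+i) choose j)) * (-1) ^ j * w ^ j)
      = pochhammer (real N + a + b + 1) j * pochhammer (- real N - b) (N - j) / (fact (N - j) * fact j) * w ^ j"
      unfolding c_def key_h[OF a j] .
  qed
  finally show ?thesis by (simp add: w_def)
qed



lemma Gamma_poch_pos:
  fixes z :: real
  assumes "z > 0"
  shows "Gamma (z + real k) = Gamma z * pochhammer z k"
proof -
  have "z \<notin> \<int>\<^sub>\<le>\<^sub>0" using assms nonpos_Ints_nonpos by force
  from pochhammer_Gamma[OF this, of k] show ?thesis
    using Gamma_real_pos[OF assms] by (simp add: field_simps)
qed

lemma S_formula:
  fixes a b :: real
  assumes a: "a > -1" and b: "b > -1"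
  shows "(\<Sum>k\<le>n. pochhammer (a+1) n / fact n * (pochhammer (- real n) k * pochhammer (a + b + real n + 1) k
              / (pochhammer (a + 1) k * fact k)) * Beta (a + real k + 1) (b + real i + 1))
    = Gamma (a + real n + 1) / fact n * Gamma (b + real i + 1) / Gamma (a + b + real i + real n + 2)
        * pochhammer (real i + 1 - real n) n"
proof -
  define C where "C = a + b + real i + 2"
  define B where "B = a + b + real n + 1"
  have C: "C > 0" using a b by (simp add: C_def)
  have a1: "a + 1 > 0" using a by simp
  have b1: "b + real i + 1 > 0" using b by simp
  have pa: "pochhammer (a+1) k > 0" for k using a1 by (rule pochhammer_pos)
  have pC: "pochhammer C k > 0" for k using C by (rule pochhammer_pos)
  have GC: "Gamma C > 0" using C by simp
  have Ga: "Gamma (a+1) > 0" using a1 by simp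
  have trm: "pochhammer (a+1) n / fact n * (pochhammer (- real n) k * pochhammer B k
              / (pochhammer (a + 1) k * fact k)) * Beta (a + real k + 1) (b + real i + 1)
      = (pochhammer (a+1) n / fact n * Gamma (a+1) * Gamma (b + real i + 1) / Gamma C) *
        (pochhammer B k * pochhammer (- real n) k / (fact k * pochhammer C k))" for k
  proof -
    have e1: "Gamma (a + real k + 1) = Gamma (a+1) * pochhammer (a+1) k"
      using Gamma_poch_pos[OF a1, of k] by (simp add: add_ac)
    have e2: "Gamma (a + real k + 1 + (b + real i + 1)) = Gamma C * pochhammer C k"
      using Gamma_poch_pos[OF C, of k] by (simp add: C_def add_ac)
    show ?thesis unfolding Beta_def e1 e2 using pa[of k] pC[of k] GC Ga
      by (simp add: field_simps)
  qed
  have vm: "(\<Sum>k\<le>n. pochhammer B k * pochhammer (- real n) k / (fact k * pochhammer C k))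
      = pochhammer (C - B) n / pochhammer C n"
    using Vandermonde_pochhammer[of n C B] C
    by (simp add: atLeast0AtMost)
  have e3: "C - B = real i + 1 - real n" by (simp add: C_def B_def)
  have e4: "Gamma (a + real n + 1) = Gamma (a+1) * pochhammer (a+1) n"
    using Gamma_poch_pos[OF a1, of n] by (simp add: add_ac)
  have e5: "Gamma (a + b + real i + real n + 2) = Gamma C * pochhammer C n"
    using Gamma_poch_pos[OF C, of n] by (simp add: C_def add_ac)
  show ?thesis
    unfolding B_def[symmetric] trm sum_distrib_left[symmetric] vm e3 e4 e5
    using pC[of n] GC by (simp add: field_simps)
qed


lemma per_term:
  fixes a b :: real
  assumes a: "a > -1" and b: "b > -1" and kq: "k \<le> q" and qm: "q \<le> m"
  shows "pochhammer (real (n+m) + a + b + 1) (n+q) * pochhammer (- real (n+m) - b) ((n+m) - (n+q))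
           / (fact ((n+m) - (n+q)) * fact (n+q)) * (fact (n+q) / fact q)
         * (of_nat (q choose k) * (pochhammer (b + real n + 1) k / pochhammer (a + b + 2 * real n + 2) k))
   = pochhammer (a + b + real m + real n + 1) (m + n) / fact m *
       (pochhammer (- real m) (k + (m - q)) * pochhammer (b + real n + 1) k * pochhammer (- b - real m - real n) (m - q)
         / (pochhammer (a + b + 2 * real n + 2) k * pochhammer (- a - b - 2 * real m - 2 * real n) (m - q)
            * fact k * fact (m - q)) * (-1) ^ k)"
proof -
  define l where "l = m - q"
  define X where "X = a + b + 2 * real m + 2 * real n - real l + 1"
  have l1: "(n+m) - (n+q) = l" by (simp add: l_def)
  have pX: "pochhammer X l > 0"
  proof (cases "l = 0")
    case False
    then have "m \<ge> 1" by (simp add: l_def)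
    then have "X > 0" using a b qm by (simp add: X_def l_def of_nat_diff)
    then show ?thesis by (rule pochhammer_pos)
  qed simp
  have pc: "pochhammer (a + b + 2 * real n + 2) k > 0" using a b by (intro pochhammer_pos) simp
  have e1: "pochhammer (- real m) (k + l) = (-1) ^ (k + l) * (fact m / fact (q - k))"
  proof -
    have "k + l \<le> m" "m - (k + l) = q - k" using kq qm by (auto simp: l_def)
    with poch_neg_nat[of "k + l" m] have "pochhammer (- real m) (k + l) * (-1) ^ (k + l) = fact m / fact (q - k)"
      by simp
    moreover have "(-1::real) ^ (k + l) * (-1) ^ (k + l) = 1"
      by (simp flip: power_mult_distrib)
    ultimately show ?thesis
      by (metis mult.assoc mult.right_neutral mult.commute)
  qed
  have e2: "pochhammer (- a - b - 2 * real m - 2 * real n) l = (-1) ^ l * pochhammer X l"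
    using pochhammer_minus[of "a + b + 2 * real m + 2 * real n" l] by (simp add: X_def)
  have e3: "pochhammer (a + b + real m + real n + 1) (m + n)
      = pochhammer (real (n+m) + a + b + 1) (n+q) * pochhammer X l"
  proof -
    have h: "m + n = (n + q) + l" using qm by (simp add: l_def)
    have h2: "real (n+m) + a + b + 1 + real (n + q) = X" using qm by (simp add: X_def l_def of_nat_diff)
    have e0: "a + b + real m + real n + 1 = real (n+m) + a + b + 1" by simp
    have "pochhammer (a + b + real m + real n + 1) (m + n) = pochhammer (real (n+m) + a + b + 1) ((n + q) + l)"
      by (simp only: e0 h)
    also have "\<dots> = pochhammer (real (n+m) + a + b + 1) (n+q) * pochhammer X l"
      using pochhammer_product'[of "real (n+m) + a + b + 1" "n+q" l] unfolding h2 .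
    finally show ?thesis .
  qed
  have e4: "of_nat (q choose k) = (fact q :: real) / (fact k * fact (q - k))"
    using kq by (simp add: binomial_fact)
  have e5: "- real (n+m) - b = - b - real m - real n" by simp
  have s: "(-1::real) ^ (k + l) * (-1) ^ k = (-1) ^ l"
  proof -
    have "(-1::real) ^ k * (-1) ^ k = 1" by (simp flip: power_mult_distrib)
    then show ?thesis by (simp only: power_add mult.assoc mult.commute[of "(-1::real)^l"]) simp
  qed
  show ?thesis
    unfolding l_def[symmetric] l1 e1 e2 e3 e4 e5
    using pX pc
    by (simp add: field_simps power_add)
qed


lemma FIN:
  fixes a b y t :: real and h S :: "nat \<Rightarrow> real"
  assumes a: "a > -1" and b: "b > -1"
  and hdef: "\<And>j. h j = pochhammer (real (n+m) + a + b + 1) j * pochhammer (- real (n+m) - b) ((n+m) - j)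
            / (fact ((n+m) - j) * fact j)"
  and Sdef: "\<And>i. S i = Gamma (a + real n + 1) / fact n * Gamma (b + real i + 1) / Gamma (a + b + real i + real n + 2)
        * pochhammer (real i + 1 - real n) n"
  and tdef: "t = y / 2"
  shows "(\<Sum>j\<le>n+m. h j * (\<Sum>i\<le>j. of_nat (j choose i) * t ^ (j - i) * S i))
    = Gamma (a + real n + 1) * Gamma (b + real n + 1) / (fact n * Gamma (a + b + 2 * real n + 2))
      * pochhammer (a + b + real m + real n + 1) (m + n) / fact m
      * appellF2_poly m (b + real n + 1) (- b - real m - real n) (a + b + 2 * real n + 2)
        (- a - b - 2 * real m - 2 * real n) y"
proof -
  define K0 where "K0 = Gamma (a + real n + 1) * Gamma (b + real n + 1) / (fact n * Gamma (a + b + 2 * real n + 2))"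
  define \<rho> where "\<rho> p = pochhammer (b + real n + 1) p / pochhammer (a + b + 2 * real n + 2) p" for p
  have S0: "S i = 0" if "i < n" for i
  proof -
    have "pochhammer (real i + 1 - real n) n = 0"
      unfolding pochhammer_eq_0_iff using that
      by (intro exI[of _ "n - 1 - i"]) (auto simp: of_nat_diff)
    then show ?thesis by (simp add: Sdef)
  qed
  have Snp: "S (n + p) = K0 * (fact (n + p) / fact p) * \<rho> p" for p
  proof -
    have b1: "b + real n + 1 > 0" using b by simp
    have c1: "a + b + 2 * real n + 2 > 0" using a b by simp
    have g1: "Gamma (b + real (n + p) + 1) = Gamma (b + real n + 1) * pochhammer (b + real n + 1) p"
      using Gamma_poch_pos[OF b1, of p] by (simp add: add_ac)
    have g2: "Gamma (a + b + real (n + p) + real n + 2) = Gamma (a + b + 2 * real n + 2) * pochhammer (a + b + 2 * real n + 2) p"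
      using Gamma_poch_pos[OF c1, of p] by (simp add: add_ac)
    have g3: "pochhammer (real (n + p) + 1 - real n) n = fact (n + p) / fact p"
    proof -
      have "fact (p + n) = (fact p :: real) * pochhammer (1 + real p) n"
        unfolding pochhammer_fact pochhammer_product' by simp
      then show ?thesis by (simp add: field_simps add.commute)
    qed
    have pc: "pochhammer (a + b + 2 * real n + 2) p > 0" using c1 by (rule pochhammer_pos)
    have G1: "Gamma (a + b + 2 * real n + 2) > 0" using c1 by simp
    show ?thesis unfolding Sdef g1 g2 g3 K0_def \<rho>_def using pc G1
      by (simp add: field_simps)
  qed
  have inner: "(\<Sum>i\<le>j. of_nat (j choose i) * t ^ (j - i) * S i)
      = K0 * (fact j / fact (j - n)) * (\<Sum>p\<le>j-n. of_nat ((j-n) choose p) * t ^ (j - n - p) * \<rho> p)"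
    if j: "n \<le> j" for j
  proof -
    have "(\<Sum>i\<le>j. of_nat (j choose i) * t ^ (j - i) * S i)
        = (\<Sum>p\<le>j-n. of_nat (j choose (n+p)) * t ^ (j - (n+p)) * S (n+p))"
      by (rule sum_split_from) (use S0 j in auto)
    also have "\<dots> = (\<Sum>p\<le>j-n. K0 * (fact j / fact (j - n)) * (of_nat ((j-n) choose p) * t ^ (j - n - p) * \<rho> p))"
    proof (rule sum.cong[OF refl])
      fix p assume "p \<in> {..j-n}"
      then have p: "n + p \<le> j" "p \<le> j - n" using j by auto
      have c: "of_nat (j choose (n+p)) * (fact (n + p) / fact p) = (fact j / fact (j - n)) * (of_nat ((j-n) choose p) :: real)"
        using p by (simp add: binomial_fact field_simps)
      show "of_nat (j choose (n+p)) * t ^ (j - (n+p)) * S (n+p) = K0 * (fact j / fact (j - n)) * (of_nat ((j-n) choose p) * t ^ (j - n - p) * \<rho> p)"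
        unfolding Snp using c
        by (metis (no_types, lifting) diff_diff_left mult.assoc mult.commute)
    qed
    finally show ?thesis by (simp add: sum_distrib_left)
  qed
  have "(\<Sum>j\<le>n+m. h j * (\<Sum>i\<le>j. of_nat (j choose i) * t ^ (j - i) * S i))
      = (\<Sum>q\<le>n+m-n. h (n+q) * (\<Sum>i\<le>n+q. of_nat ((n+q) choose i) * t ^ ((n+q) - i) * S i))"
  proof (rule sum_split_from)
    fix j assume "j < n"
    then have "(\<Sum>i\<le>j. of_nat (j choose i) * t ^ (j - i) * S i) = 0"
      by (intro sum.neutral) (auto simp: S0)
    then show "h j * (\<Sum>i\<le>j. of_nat (j choose i) * t ^ (j - i) * S i) = 0" by simp
  qed simp
  also have "\<dots> = (\<Sum>q\<le>m. h (n+q) * (K0 * (fact (n+q) / fact q) * (\<Sum>p\<le>q. of_nat (q choose p) * t ^ (q - p) * \<rho> p)))"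
    by (rule sum.cong) (simp_all add: inner)
  also have "\<dots> = K0 * pochhammer (a + b + real m + real n + 1) (m + n) / fact m *
      (\<Sum>q\<le>m. \<Sum>k\<le>q. pochhammer (- real m) (k + (m - q)) * pochhammer (b + real n + 1) k * pochhammer (- b - real m - real n) (m - q)
         / (pochhammer (a + b + 2 * real n + 2) k * pochhammer (- a - b - 2 * real m - 2 * real n) (m - q)
            * fact k * fact (m - q)) * (-1) ^ k * t ^ (q - k))"
    unfolding sum_distrib_left[of "K0 * pochhammer (a + b + real m + real n + 1) (m + n) / fact m"]
  proof (rule sum.cong[OF refl])
    fix q assume "q \<in> {..m}"
    then have q: "q \<le> m" by simp
    show "h (n+q) * (K0 * (fact (n+q) / fact q) * (\<Sum>p\<le>q. of_nat (q choose p) * t ^ (q - p) * \<rho> p))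
      = (\<Sum>k\<le>q. K0 * pochhammer (a + b + real m + real n + 1) (m + n) / fact m *
          (pochhammer (- real m) (k + (m - q)) * pochhammer (b + real n + 1) k * pochhammer (- b - real m - real n) (m - q)
         / (pochhammer (a + b + 2 * real n + 2) k * pochhammer (- a - b - 2 * real m - 2 * real n) (m - q)
            * fact k * fact (m - q)) * (-1) ^ k * t ^ (q - k)))"
      unfolding sum_distrib_left[of "h (n+q)"] sum_distrib_left[of "K0 * (fact (n+q) / fact q)"]
    proof (rule sum.cong[OF refl])
      fix k assume "k \<in> {..q}"
      then have k: "k \<le> q" by simp
      note pt = per_term[OF a b k q, of n]
      show "h (n+q) * (K0 * (fact (n+q) / fact q) * (of_nat (q choose k) * t ^ (q - k) * \<rho> k))
        = K0 * pochhammer (a + b + real m + real n + 1) (m + n) / fact m *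
          (pochhammer (- real m) (k + (m - q)) * pochhammer (b + real n + 1) k * pochhammer (- b - real m - real n) (m - q)
         / (pochhammer (a + b + 2 * real n + 2) k * pochhammer (- a - b - 2 * real m - 2 * real n) (m - q)
            * fact k * fact (m - q)) * (-1) ^ k * t ^ (q - k))"
        using arg_cong[OF pt, of "\<lambda>z. K0 * t ^ (q - k) * z"] unfolding hdef \<rho>_def
        by (simp add: mult_ac times_divide_eq_right times_divide_eq_left)
    qed
  qed
  also have "(\<Sum>q\<le>m. \<Sum>k\<le>q. pochhammer (- real m) (k + (m - q)) * pochhammer (b + real n + 1) k * pochhammer (- b - real m - real n) (m - q)
         / (pochhammer (a + b + 2 * real n + 2) k * pochhammer (- a - b - 2 * real m - 2 * real n) (m - q)
            * fact k * fact (m - q)) * (-1) ^ k * t ^ (q - k))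
     = appellF2_poly m (b + real n + 1) (- b - real m - real n) (a + b + 2 * real n + 2)
        (- a - b - 2 * real m - 2 * real n) y"
  proof -
    define T where "T k l = pochhammer (- real m) (k + l) * pochhammer (b + real n + 1) k * pochhammer (- b - real m - real n) l
         / (pochhammer (a + b + 2 * real n + 2) k * pochhammer (- a - b - 2 * real m - 2 * real n) l
            * fact k * fact l) * (-1) ^ k * t ^ (m - k - l)" for k l
    have "appellF2_poly m (b + real n + 1) (- b - real m - real n) (a + b + 2 * real n + 2)
        (- a - b - 2 * real m - 2 * real n) y = (\<Sum>k\<le>m. \<Sum>l\<le>m-k. T k l)"
      unfolding appellF2_poly_def T_def tdef ..
    also have "\<dots> = (\<Sum>l\<le>m. \<Sum>k\<le>m-l. T k l)" by (rule tri2)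
    also have "\<dots> = (\<Sum>q\<le>m. \<Sum>k\<le>m-(m-q). T k (m-q))" by (rule sum_rev_atMost)
    also have "\<dots> = (\<Sum>q\<le>m. \<Sum>k\<le>q. T k (m-q))"
      by (intro sum.cong refl) auto
    finally have F: "appellF2_poly m (b + real n + 1) (- b - real m - real n) (a + b + 2 * real n + 2)
        (- a - b - 2 * real m - 2 * real n) y = (\<Sum>q\<le>m. \<Sum>k\<le>q. T k (m-q))" .
    show ?thesis unfolding F T_def
      by (rule sum.cong[OF refl], rule sum.cong[OF refl]) auto
  qed
  finally show ?thesis unfolding K0_def by (simp add: mult_ac)
qed



theorem theorem1:
  fixes a b y :: real and m n :: nat
  assumes "a > -1" and "b > -1"
  shows "jacobi_R a b m n y =
    2 powr (a + b + 1) * (Gamma (a + real n + 1) * Gamma (b + real n + 1) / Gamma (a + b + 2 * real n + 2))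
    * pochhammer (a + b + real m + real n + 1) (m + n)
    * (1 / (fact n * fact m))
    * appellF2_poly m (b + real n + 1) (- b - real m - real n) (a + b + 2 * real n + 2)
        (- a - b - 2 * real m - 2 * real n) y"
proof -
  note a = assms(1) and b = assms(2)
  define t where "t = y / 2"
  define A where "A k = pochhammer (a+1) n / fact n * (pochhammer (- real n) k * pochhammer (a + b + real n + 1) k
              / (pochhammer (a + 1) k * fact k))" for k
  define h where "h j = pochhammer (real (n+m) + a + b + 1) j * pochhammer (- real (n+m) - b) ((n+m) - j)
            / (fact ((n+m) - j) * fact j)" for j
  define S where "S i = Gamma (a + real n + 1) / fact n * Gamma (b + real i + 1) / Gamma (a + b + real i + real n + 2)
        * pochhammer (real i + 1 - real n) n" for i
  define W where "W x = (1 - x) powr a * (1 + x) powr b" for x :: real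
  define c where "c k j i = A k * h j * (of_nat (j choose i) * t ^ (j - i))" for k j i
  have Pn: "jacobiP n a b x = (\<Sum>k\<le>n. A k * ((1 - x) / 2) ^ k)" for x
    unfolding jacobiP_def A_def by (simp add: sum_distrib_left mult.assoc)
  have PN: "jacobiP (n+m) a b (x + y) = (\<Sum>j\<le>n+m. h j * (\<Sum>i\<le>j. of_nat (j choose i) * t ^ (j - i) * ((1 + x) / 2) ^ i))" for x
  proof -
    have e: "(1 + (x + y)) / 2 = (1 + x) / 2 + t" by (simp add: t_def field_simps)
    show ?thesis unfolding jacobi_w[OF a, of "n+m" b "x+y"] e binomial_ring h_def
      by (intro sum.cong refl) (simp add: mult_ac)
  qed
  have pw: "W x * jacobiP n a b x * jacobiP (n+m) a b (x + y)
      = (\<Sum>j\<le>n+m. \<Sum>i\<le>j. \<Sum>k\<le>n. c k j i * (W x * (((1 - x) / 2) ^ k * ((1 + x) / 2) ^ i)))" for x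
    unfolding Pn PN c_def
    by (simp add: sum_distrib_left sum_distrib_right mult_ac)
  define V where "V = (\<Sum>j\<le>n+m. \<Sum>i\<le>j. \<Sum>k\<le>n. c k j i * (2 powr (a + b + 1) * Beta (a + real k + 1) (b + real i + 1)))"
  have hi: "((\<lambda>x. \<Sum>j\<le>n+m. \<Sum>i\<le>j. \<Sum>k\<le>n. c k j i * (W x * (((1 - x) / 2) ^ k * ((1 + x) / 2) ^ i))) has_integral V) {-1..1}"
    unfolding V_def W_def
    by (intro has_integral_sum finite_atMost has_integral_mult_right IL[OF a b])
  have R: "jacobi_R a b m n y = V"
    unfolding jacobi_R_def using integral_unique[OF hi] pw by (simp add: W_def)
  have V2: "V = 2 powr (a + b + 1) * (\<Sum>j\<le>n+m. h j * (\<Sum>i\<le>j. of_nat (j choose i) * t ^ (j - i) * S i))"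
  proof -
    have "V = (\<Sum>j\<le>n+m. \<Sum>i\<le>j. \<Sum>k\<le>n. c k j i * (2 powr (a + b + 1) * Beta (a + real k + 1) (b + real i + 1)))"
      unfolding V_def ..
    also have "\<dots> = (\<Sum>j\<le>n+m. 2 powr (a + b + 1) * (h j * (\<Sum>i\<le>j. of_nat (j choose i) * t ^ (j - i) * S i)))"
    proof (rule sum.cong[OF refl])
      fix j
      have "(\<Sum>i\<le>j. \<Sum>k\<le>n. c k j i * (2 powr (a + b + 1) * Beta (a + real k + 1) (b + real i + 1)))
          = (\<Sum>i\<le>j. 2 powr (a + b + 1) * h j * (of_nat (j choose i) * t ^ (j - i)) * (\<Sum>k\<le>n. A k * Beta (a + real k + 1) (b + real i + 1)))"
        unfolding c_def by (simp add: sum_distrib_left mult_ac)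
      also have "\<dots> = (\<Sum>i\<le>j. 2 powr (a + b + 1) * h j * (of_nat (j choose i) * t ^ (j - i)) * S i)"
        unfolding A_def S_def using S_formula[OF a b] by simp
      also have "\<dots> = 2 powr (a + b + 1) * (h j * (\<Sum>i\<le>j. of_nat (j choose i) * t ^ (j - i) * S i))"
        by (simp add: sum_distrib_left mult_ac)
      finally show "(\<Sum>i\<le>j. \<Sum>k\<le>n. c k j i * (2 powr (a + b + 1) * Beta (a + real k + 1) (b + real i + 1)))
          = 2 powr (a + b + 1) * (h j * (\<Sum>i\<le>j. of_nat (j choose i) * t ^ (j - i) * S i))" .
    qed
    finally show ?thesis by (simp add: sum_distrib_left)
  qed
  have F: "(\<Sum>j\<le>n+m. h j * (\<Sum>i\<le>j. of_nat (j choose i) * t ^ (j - i) * S i))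
    = Gamma (a + real n + 1) * Gamma (b + real n + 1) / (fact n * Gamma (a + b + 2 * real n + 2))
      * pochhammer (a + b + real m + real n + 1) (m + n) / fact m
      * appellF2_poly m (b + real n + 1) (- b - real m - real n) (a + b + 2 * real n + 2)
        (- a - b - 2 * real m - 2 * real n) y"
    by (rule FIN[OF a b]) (simp_all add: h_def S_def t_def)
  show ?thesis unfolding R V2 F by (simp add: field_simps)
qed


end
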